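(* Let $F$ be a field, $\ell\le m$ positive integers, $V$ an $m$-dimensional $F$-vector space, and $E$ a close subspace of $\bigwedge^{\ell}V$ of dimension $r$. Then $E$ is decomposable. Moreover, if $\{\omega_1,\dots,\omega_r\}$ is a basis of $E$, then $V_E=V_{\omega_1}\cap\cdots\cap V_{\omega_r}$ and $V^E=V_{\omega_1}+\cdots+V_{\omega_r}$. Further, if $r>1$, then $\dim V_E=\ell-1$ and $\dim V^E=\ell+r-1$ if $E$ is close of type I, whereas $\dim V_E=\ell-r+1$ and $\dim V^E=\ell+1$ if $E$ is close of type II.
   Context: For $\omega\in\bigwedge^{\ell}V$, $V_\omega=\{v\in V: v\wedge\omega=0\}$. For a subspace $E$ of $\bigwedge^{\ell}V$, $V_E=\bigcap_{\omega\in E}V_\omega$ and $V^E=\sum_{0\ne\omega\in E}V_\omega$. A nonzero $\omega$ is decomposable if $\omega=v_1\wedge\cdots\wedge v_\ell$ with $v_i\in V$; a subspace is decomposable if all nonzero elements are. With $r=\dim E$: $E$ is close of type I if there are linearly independent $f_1,\dots,f_{\ell-1},g_1,\dots,g_r\in V$ with $E=\mathrm{span}\{f_1\wedge\cdots\wedge f_{\ell-1}\wedge g_i:1\le i\le r\}$; close of type II if there are linearly independent $u_1,\dots,u_{\ell-r+1},g_1,\dots,g_r\in V$ with $E=\mathrm{span}\{u_1\wedge\cdots\wedge u_{\ell-r+1}\wedge g_1\wedge\cdots\wedge\widehat{g_i}\wedge\cdots\wedge g_r:1\le i\le r\}$ ($\widehat{g_i}$ omitted); close if of type I or type II. *)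

theory Defs
  imports Complex_Main "HOL-Library.Function_Algebras"
begin

text \<open>Concrete model: V = ('n => 'a) with 'n a finite linearly ordered index type
  (the standard basis e_i, i :: 'n), so m = CARD('n). The exterior power is modelled
  by coordinates with respect to the basis e_S (S an l-subset of 'n, wedge in increasing
  order): an element is a function 'n set => 'a vanishing off the l-subsets.\<close>

definition fscale :: "'a::field \<Rightarrow> ('b \<Rightarrow> 'a) \<Rightarrow> ('b \<Rightarrow> 'a)" where
  "fscale c f = (\<lambda>x. c * f x)"

definition ext_power :: "nat \<Rightarrow> ('n::{finite,linorder} set \<Rightarrow> 'a::field) set" where
  "ext_power l = {\<omega>. \<forall>S. card S \<noteq> l \<longrightarrow> \<omega> S = 0}"

definition wedge_vec :: "('n::{finite,linorder} \<Rightarrow> 'a::field) \<Rightarrow> ('n set \<Rightarrow> 'a) \<Rightarrow> ('n set \<Rightarrow> 'a)" where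
  "wedge_vec v \<omega> = (\<lambda>T. \<Sum>i\<in>T. (-1) ^ card {j\<in>T. j < i} * v i * \<omega> (T - {i}))"

definition ext_one :: "'n set \<Rightarrow> 'a::field" where
  "ext_one = (\<lambda>S. if S = {} then 1 else 0)"

fun wedge_list :: "('n::{finite,linorder} \<Rightarrow> 'a::field) list \<Rightarrow> ('n set \<Rightarrow> 'a)" where
  "wedge_list [] = ext_one"
| "wedge_list (v # vs) = wedge_vec v (wedge_list vs)"

definition lin_indep_list :: "('n \<Rightarrow> 'a::field) list \<Rightarrow> bool" where
  "lin_indep_list vs \<longleftrightarrow> distinct vs \<and> \<not> Modules.module.dependent fscale (set vs)"

definition decomposable :: "nat \<Rightarrow> ('n::{finite,linorder} set \<Rightarrow> 'a::field) \<Rightarrow> bool" where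
  "decomposable l \<omega> \<longleftrightarrow> \<omega> \<noteq> 0 \<and> (\<exists>vs. length vs = l \<and> \<omega> = wedge_list vs)"

definition decomposable_subspace :: "nat \<Rightarrow> ('n::{finite,linorder} set \<Rightarrow> 'a::field) set \<Rightarrow> bool" where
  "decomposable_subspace l E \<longleftrightarrow> (\<forall>\<omega>\<in>E. \<omega> \<noteq> 0 \<longrightarrow> decomposable l \<omega>)"

definition V_of :: "('n::{finite,linorder} set \<Rightarrow> 'a::field) \<Rightarrow> ('n \<Rightarrow> 'a) set" where
  "V_of \<omega> = {v. wedge_vec v \<omega> = 0}"

definition V_low :: "('n::{finite,linorder} set \<Rightarrow> 'a::field) set \<Rightarrow> ('n \<Rightarrow> 'a) set" where
  "V_low E = (\<Inter>\<omega>\<in>E. V_of \<omega>)"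

definition V_up :: "('n::{finite,linorder} set \<Rightarrow> 'a::field) set \<Rightarrow> ('n \<Rightarrow> 'a) set" where
  "V_up E = Modules.module.span fscale (\<Union>\<omega>\<in>E - {0}. V_of \<omega>)"

definition close_I :: "nat \<Rightarrow> nat \<Rightarrow> ('n::{finite,linorder} set \<Rightarrow> 'a::field) set \<Rightarrow> bool" where
  "close_I l r E \<longleftrightarrow> (\<exists>fs gs. length fs = l - 1 \<and> length gs = r \<and> lin_indep_list (fs @ gs) \<and>
     E = Modules.module.span fscale {wedge_list (fs @ [gs ! i]) | i. i < r})"

definition close_II :: "nat \<Rightarrow> nat \<Rightarrow> ('n::{finite,linorder} set \<Rightarrow> 'a::field) set \<Rightarrow> bool" where
  "close_II l r E \<longleftrightarrow> (\<exists>us gs. int (length us) = int l - int r + 1 \<and> length gs = r \<and>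
     lin_indep_list (us @ gs) \<and>
     E = Modules.module.span fscale {wedge_list (us @ take i gs @ drop (Suc i) gs) | i. i < r})"

definition close :: "nat \<Rightarrow> nat \<Rightarrow> ('n::{finite,linorder} set \<Rightarrow> 'a::field) set \<Rightarrow> bool" where
  "close l r E \<longleftrightarrow> close_I l r E \<or> close_II l r E"

end

theory Submission
  imports Defs
begin


interpretation V: vector_space "fscale :: 'a::field \<Rightarrow> ('b \<Rightarrow> 'a) \<Rightarrow> ('b \<Rightarrow> 'a)"
  by unfold_locales (auto simp: fscale_def fun_eq_iff algebra_simps)

declare zero_fun_apply[simp del] plus_fun_apply[simp del]

lemma sum_apply: "(\<Sum>i\<in>A. f i) x = (\<Sum>i\<in>A. f i x)"
  by (induction A rule: infinite_finite_induct) (auto simp: zero_fun_apply plus_fun_apply)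

lemma fscale_apply: "fscale c f x = c * f x" by (simp add: fscale_def)

lemma vsp[simp]: "vector_space (fscale :: 'a::field \<Rightarrow> ('b \<Rightarrow> 'a) \<Rightarrow> _)"
  by (rule V.vector_space_axioms)

lemma wv_add_left: "wedge_vec (v + w) \<omega> = wedge_vec v \<omega> + wedge_vec w \<omega>"
  by (simp add: wedge_vec_def fun_eq_iff algebra_simps sum.distrib plus_fun_apply)
lemma wv_add_right: "wedge_vec v (\<omega> + \<eta>) = wedge_vec v \<omega> + wedge_vec v \<eta>"
  by (simp add: wedge_vec_def fun_eq_iff algebra_simps sum.distrib plus_fun_apply)
lemma wv_scale_left: "wedge_vec (fscale c v) \<omega> = fscale c (wedge_vec v \<omega>)"
  by (simp add: wedge_vec_def fun_eq_iff sum_distrib_left algebra_simps fscale_def)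
lemma wv_scale_right: "wedge_vec v (fscale c \<omega>) = fscale c (wedge_vec v \<omega>)"
  by (simp add: wedge_vec_def fun_eq_iff sum_distrib_left algebra_simps fscale_def)
lemma wv_zero_left[simp]: "wedge_vec 0 \<omega> = 0"
  by (simp add: wedge_vec_def fun_eq_iff zero_fun_apply)
lemma wv_zero_right[simp]: "wedge_vec v 0 = 0"
  by (simp add: wedge_vec_def fun_eq_iff zero_fun_apply)

lemma linear_wv_right: "Vector_Spaces.linear fscale fscale (wedge_vec v)"
  unfolding Vector_Spaces.linear_iff by (auto simp: wv_add_right wv_scale_right)
lemma linear_wv_left: "Vector_Spaces.linear fscale fscale (\<lambda>v. wedge_vec v \<omega>)"
  unfolding Vector_Spaces.linear_iff by (auto simp: wv_add_left wv_scale_left)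

lemma wv_alt: "wedge_vec v (wedge_vec v \<omega>) = (0 :: 'n::{finite,linorder} set \<Rightarrow> 'a::field)"
proof (rule ext)
  fix T :: "'n set"
  define s where "s = (\<lambda>(U::'n set) i. (-1::'a) ^ card {k\<in>U. k < i})"
  define g where "g = (\<lambda>i j. s T i * v i * (s (T - {i}) j * v j * \<omega> (T - {i} - {j})))"
  have A: "wedge_vec v (wedge_vec v \<omega>) T = (\<Sum>i\<in>T. \<Sum>j\<in>T - {i}. g i j)"
    by (simp add: wedge_vec_def g_def s_def sum_distrib_left)
  have B: "(\<Sum>j\<in>T - {i}. g i j) = (\<Sum>j\<in>T. if j < i then g i j else 0) + (\<Sum>j\<in>T. if i < j then g i j else 0)" for i
  proof -
    have "(\<Sum>j\<in>T - {i}. g i j) = (\<Sum>j\<in>T. if j \<noteq> i then g i j else 0)"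
      by (rule sum.mono_neutral_cong_left) auto
    also have "\<dots> = (\<Sum>j\<in>T. (if j < i then g i j else 0) + (if i < j then g i j else 0))"
      by (rule sum.cong) auto
    finally show ?thesis by (simp add: sum.distrib)
  qed
  have C: "(\<Sum>i\<in>T. \<Sum>j\<in>T. if i < j then g i j else 0) = (\<Sum>i\<in>T. \<Sum>j\<in>T. if j < i then g j i else 0)"
    by (rule sum.swap)
  have D: "g i j + g j i = 0" if "j < i" "i \<in> T" "j \<in> T" for i j
  proof -
    have e1: "{k \<in> T - {i}. k < j} = {k \<in> T. k < j}" using that by auto
    have e2: "{k \<in> T. k < i} = insert j {k \<in> T - {j}. k < i}" using that by auto
    have e3: "card {k \<in> T. k < i} = Suc (card {k \<in> T - {j}. k < i})"
      by (subst e2) (auto intro!: card_insert_disjoint)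
    have e4: "T - {i} - {j} = T - {j} - {i}" by auto
    show ?thesis unfolding g_def s_def using e1 e3 e4 by (simp add: algebra_simps)
  qed
  have "wedge_vec v (wedge_vec v \<omega>) T = (\<Sum>i\<in>T. \<Sum>j\<in>T. if j < i then g i j else 0) + (\<Sum>i\<in>T. \<Sum>j\<in>T. if i < j then g i j else 0)"
    unfolding A B sum.distrib by simp
  also have "\<dots> = (\<Sum>i\<in>T. \<Sum>j\<in>T. (if j < i then g i j else 0) + (if j < i then g j i else 0))"
    unfolding C by (simp add: sum.distrib)
  also have "\<dots> = (\<Sum>i\<in>T. \<Sum>j\<in>T. if j < i then g i j + g j i else 0)"
    by (auto intro!: sum.cong)
  also have "\<dots> = 0" using D by (auto intro!: sum.neutral)
  finally show "wedge_vec v (wedge_vec v \<omega>) T = 0 T" by (simp add: zero_fun_apply)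
qed

lemma wv_anti: "wedge_vec v (wedge_vec w \<omega>) = - wedge_vec w (wedge_vec v (\<omega> :: 'n::{finite,linorder} set \<Rightarrow> 'a::field))"
proof -
  have "0 = wedge_vec (v + w) (wedge_vec (v + w) \<omega>)" by (simp add: wv_alt)
  also have "\<dots> = wedge_vec v (wedge_vec w \<omega>) + wedge_vec w (wedge_vec v \<omega>)"
    by (simp add: wv_add_left wv_add_right wv_alt)
  finally show ?thesis by (simp add: eq_neg_iff_add_eq_0)
qed

lemma wl_append: "wedge_list (xs @ ys) = foldr wedge_vec xs (wedge_list ys)"
  by (induction xs) auto

lemma foldr_add: "foldr wedge_vec xs (a + b) = foldr wedge_vec xs a + foldr wedge_vec xs b"
  by (induction xs) (auto simp: wv_add_right)
lemma foldr_scale: "foldr wedge_vec xs (fscale c a) = fscale c (foldr wedge_vec xs a)"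
  by (induction xs) (auto simp: wv_scale_right)
lemma foldr_zero[simp]: "foldr wedge_vec xs 0 = 0"
  by (induction xs) auto
lemma linear_foldr: "Vector_Spaces.linear fscale fscale (foldr wedge_vec xs)"
  unfolding Vector_Spaces.linear_iff by (auto simp: foldr_add foldr_scale)

lemma F5a: "w \<in> set xs \<Longrightarrow> wedge_vec w (wedge_list xs) = (0 :: 'n::{finite,linorder} set \<Rightarrow> 'a::field)"
proof (induction xs)
  case (Cons x xs)
  show ?case
  proof (cases "w = x")
    case True then show ?thesis by (simp add: wv_alt)
  next
    case False then have "w \<in> set xs" using Cons by auto
    then show ?thesis using Cons by (simp add: wv_anti[of w x])
  qed
qed simp

lemma F5: "w \<in> V.span (set xs) \<Longrightarrow> wedge_vec w (wedge_list xs) = (0 :: 'n::{finite,linorder} set \<Rightarrow> 'a::field)"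
  by (induction rule: V.span_induct_alt) (auto simp: wv_add_left wv_scale_left F5a)

lemma lil_Nil[simp]: "lin_indep_list []"
  using V.independent_empty by (simp add: lin_indep_list_def)

lemma lil_Cons: "lin_indep_list (v # xs) \<longleftrightarrow> lin_indep_list xs \<and> v \<notin> V.span (set xs)"
  unfolding lin_indep_list_def using V.independent_insert[of v "set xs"] V.span_base[of v "set xs"]
  by auto

lemma F4: "\<not> lin_indep_list ys \<Longrightarrow> wedge_list ys = (0 :: 'n::{finite,linorder} set \<Rightarrow> 'a::field)"
proof (induction ys)
  case Nil then show ?case by simp
next
  case (Cons y ys)
  show ?case
  proof (cases "lin_indep_list ys")
    case False then show ?thesis using Cons by simp
  next
    case True
    then have "y \<in> V.span (set ys)" using Cons.prems lil_Cons by blast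
    then show ?thesis by (simp add: F5)
  qed
qed

lemma V_of_scale: "c \<noteq> 0 \<Longrightarrow> V_of (fscale c \<omega>) = V_of \<omega>"
proof -
  assume c: "c \<noteq> 0"
  have "wedge_vec v (fscale c \<omega>) = 0 \<longleftrightarrow> wedge_vec v \<omega> = 0" for v
    using c by (simp add: wv_scale_right)
  then show ?thesis by (simp add: V_of_def)
qed

lemma L1: "wedge_list (as @ y # bs) = fscale ((-1) ^ length as) (wedge_list (y # as @ bs) :: 'n::{finite,linorder} set \<Rightarrow> 'a::field)"
proof (induction as)
  case Nil then show ?case by (simp add: fscale_def)
next
  case (Cons a as)
  have "wedge_list ((a # as) @ y # bs) = wedge_vec a (fscale ((-1) ^ length as) (wedge_list (y # as @ bs)))"
    using Cons by simp
  also have "\<dots> = fscale ((-1) ^ length as) (wedge_vec a (wedge_vec y (wedge_list (as @ bs))))"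
    by (simp add: wv_scale_right)
  also have "\<dots> = fscale ((-1) ^ length (a # as)) (wedge_list (y # (a # as) @ bs))"
    by (simp add: wv_anti[of a y] fun_eq_iff)
  finally show ?case .
qed

lemma L2: "list_all2 (\<lambda>z z'. \<exists>d. z' = z + fscale d y) zs zs' \<Longrightarrow>
  wedge_vec y (wedge_list zs) = wedge_vec y (wedge_list zs' :: 'n::{finite,linorder} set \<Rightarrow> 'a::field)"
proof (induction rule: list_all2_induct)
  case Nil then show ?case by simp
next
  case (Cons z zs z' zs')
  then obtain d where d: "z' = z + fscale d y" by blast
  have "wedge_vec y (wedge_list (z # zs)) = - wedge_vec z (wedge_vec y (wedge_list zs))"
    by (simp add: wv_anti[of y z])
  also have "\<dots> = - wedge_vec z (wedge_vec y (wedge_list zs'))" using Cons by simp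
  also have "\<dots> = - wedge_vec z' (wedge_vec y (wedge_list zs'))"
    by (simp add: d wv_add_left wv_scale_left wv_alt)
  also have "\<dots> = wedge_vec y (wedge_list (z' # zs'))" by (simp add: wv_anti[of z' y])
  finally show ?case .
qed

lemma LA: "list_all2 (\<lambda>z z'. \<exists>d. z' = z + fscale d y) zs (map (\<lambda>z. z + fscale (h z) y) zs)"
  by (induction zs) auto

lemma LD: "length ys = length xs \<Longrightarrow> set ys \<subseteq> V.span (set xs) \<Longrightarrow>
  \<exists>c. wedge_list ys = fscale c (wedge_list xs :: 'n::{finite,linorder} set \<Rightarrow> 'a::field)"
proof (induction xs arbitrary: ys)
  case Nil then show ?case by (intro exI[of _ 1]) simp
next
  case (Cons x xs)
  have "\<forall>y\<in>set ys. \<exists>k. y - fscale k x \<in> V.span (set xs)"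
    using Cons.prems(2) V.span_breakdown_eq[of _ x "set xs"] by auto
  then obtain a where a: "\<forall>y\<in>set ys. y - fscale (a y) x \<in> V.span (set xs)" by metis
  show ?case
  proof (cases "\<exists>y\<in>set ys. a y \<noteq> 0")
    case False
    then have sub: "set ys \<subseteq> V.span (set xs)" using a by auto
    have "\<not> lin_indep_list ys"
    proof
      assume li: "lin_indep_list ys"
      then have d: "distinct ys" and ind: "V.independent (set ys)" by (auto simp: lin_indep_list_def)
      then have "card (set ys) \<le> card (set xs)" using V.independent_span_bound[OF _ ind sub] by auto
      also have "\<dots> \<le> length xs" by (rule card_length)
      finally show False using d Cons.prems(1) distinct_card by fastforce
    qed
    then show ?thesis by (intro exI[of _ 0]) (simp add: F4)
  next
    case True
    then obtain i where i: "i < length ys" "a (ys!i) \<noteq> 0" by (metis in_set_conv_nth)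
    define y where "y = ys ! i"
    define rest where "rest = take i ys @ drop (Suc i) ys"
    define rest' where "rest' = map (\<lambda>z. z + fscale (- (a z / a y)) y) rest"
    have ys_eq: "ys = take i ys @ y # drop (Suc i) ys" using i y_def by (simp add: id_take_nth_drop)
    have setrest: "set rest \<subseteq> set ys" unfolding rest_def using set_take_subset[of i ys] set_drop_subset[of "Suc i" ys] by auto
    have y_in: "y \<in> set ys" using i y_def by auto
    have r1: "wedge_list ys = fscale ((-1)^i) (wedge_list (y # rest))"
    proof -
      have "wedge_list ys = wedge_list (take i ys @ y # drop (Suc i) ys)" using ys_eq by simp
      also have "\<dots> = fscale ((-1)^length (take i ys)) (wedge_list (y # rest))"
        unfolding rest_def by (rule L1)
      finally show ?thesis using i by simp
    qed
    have r2: "wedge_list (y # rest) = wedge_vec y (wedge_list rest')"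
      using L2[OF LA[of y rest "\<lambda>z. - (a z / a y)"]] by (simp add: rest'_def)
    have ay: "a y \<noteq> 0" using i y_def by simp
    have rest'_sub: "set rest' \<subseteq> V.span (set xs)"
    proof
      fix w assume "w \<in> set rest'"
      then obtain z where z: "z \<in> set rest" "w = z + fscale (- (a z / a y)) y" by (auto simp: rest'_def)
      have "w = (z - fscale (a z) x) + fscale (- (a z / a y)) (y - fscale (a y) x)"
        using ay by (simp add: z fun_eq_iff fscale_def plus_fun_apply field_simps)
      moreover have "z - fscale (a z) x \<in> V.span (set xs)" using a z setrest by auto
      moreover have "y - fscale (a y) x \<in> V.span (set xs)" using a y_in by auto
      ultimately show "w \<in> V.span (set xs)" by (metis V.span_add V.span_scale)
    qed
    have len: "length rest' = length xs" using i Cons.prems(1) by (simp add: rest'_def rest_def)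
    obtain c where c: "wedge_list rest' = fscale c (wedge_list xs)" using Cons.IH[OF len rest'_sub] by blast
    have r3: "wedge_vec y (wedge_list xs) = fscale (a y) (wedge_list (x # xs))"
    proof -
      have "y = fscale (a y) x + (y - fscale (a y) x)" by simp
      then have "wedge_vec y (wedge_list xs) = wedge_vec (fscale (a y) x) (wedge_list xs) + wedge_vec (y - fscale (a y) x) (wedge_list xs)"
        by (metis wv_add_left)
      also have "wedge_vec (y - fscale (a y) x) (wedge_list xs) = 0" using a y_in by (simp add: F5)
      finally show ?thesis by (simp add: wv_scale_left)
    qed
    have "wedge_list ys = fscale ((-1)^i) (fscale c (fscale (a y) (wedge_list (x#xs))))"
      unfolding r1 r2 c wv_scale_right r3 by (rule refl)
    then show ?thesis by (intro exI[of _ "(-1)^i * (c * a y)"]) simp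
  qed
qed

definition e :: "'n \<Rightarrow> ('n \<Rightarrow> 'a::field)" where "e i = (\<lambda>j. if j = i then 1 else 0)"

lemma wv_e: "wedge_vec (e i :: 'n::{finite,linorder} \<Rightarrow> 'a) \<omega> = (\<lambda>T. if i \<in> T then (-1)^card {k\<in>T. k < i} * \<omega> (T - {i}) else (0::'a::field))"
proof (rule ext)
  fix T :: "'n::{finite,linorder} set"
  have "wedge_vec (e i) \<omega> T = (\<Sum>j\<in>T. if j = i then (-1)^card {k\<in>T. k < i} * \<omega> (T - {i}) else 0)"
    unfolding wedge_vec_def by (rule sum.cong) (auto simp: e_def)
  then show "wedge_vec (e i) \<omega> T = (if i \<in> T then (-1)^card {k\<in>T. k < i} * \<omega> (T - {i}) else 0)"
    by simp
qed

lemma std_wedge: fixes "is" :: "'n::{finite,linorder} list" shows "sorted_wrt (<) is \<Longrightarrow>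
  wedge_list (map e is) = (\<lambda>T. if T = set is then 1 else (0::'a::field)) \<and> (\<forall>k\<in>set is. k \<in> set is)"
proof (induction "is")
  case Nil then show ?case by (simp add: ext_one_def)
next
  case (Cons i "is")
  then have IH: "wedge_list (map e is) = (\<lambda>T. if T = set is then 1 else (0::'a))"
    and gt: "\<forall>k\<in>set is. i < k" by auto
  have ni: "i \<notin> set is" using gt by auto
  have "wedge_list (map e (i # is)) = (\<lambda>T. if T = insert i (set is) then 1 else (0::'a))"
  proof (rule ext)
    fix T
    show "wedge_list (map e (i # is)) T = (if T = insert i (set is) then 1 else (0::'a))"
    proof (cases "T = insert i (set is)")
      case True
      have "{k \<in> T. k < i} = {}" using True gt by auto
      then have c0: "card {k \<in> T. k < i} = 0" by simp
      have iT: "i \<in> T" and Ti: "T - {i} = set is" using True ni by auto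
      have "wedge_list (map e (i # is)) T = (if i \<in> T then (-1)^card {k\<in>T. k < i} * wedge_list (map (e :: 'n \<Rightarrow> 'n \<Rightarrow> 'a) is) (T - {i}) else 0)"
        by (simp only: list.map wedge_list.simps wv_e)
      also have "\<dots> = 1" using fun_cong[OF IH, of "set is"] by (simp only: iT Ti c0 if_True power_0 mult_1) simp
      finally show ?thesis using True by simp
    next
      case False
      have "i \<in> T \<Longrightarrow> T - {i} \<noteq> set is" using False ni by auto
      then show ?thesis using False by (simp add: IH wv_e)
    qed
  qed
  then show ?case by simp
qed

lemma W_nz_iff: "wedge_list (xs :: ('n::{finite,linorder} \<Rightarrow> 'a::field) list) \<noteq> 0 \<longleftrightarrow> lin_indep_list xs"
proof
  assume "wedge_list xs \<noteq> 0" then show "lin_indep_list xs" using F4 by blast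
next
  assume li: "lin_indep_list xs"
  define L :: "('n \<Rightarrow> 'a) list" where "L = map e (sorted_list_of_set (UNIV :: 'n set))"
  have WL: "wedge_list L = (\<lambda>T. if T = UNIV then 1 else 0)"
    using std_wedge[of "sorted_list_of_set (UNIV :: 'n set)"] by (simp add: L_def)
  have WLnz: "wedge_list L \<noteq> 0"
  proof
    assume h: "wedge_list L = 0"
    have "wedge_list L UNIV = 1" by (simp add: WL)
    with h show False by (simp add: zero_fun_apply)
  qed
  then have liL: "lin_indep_list L" using F4 by blast
  have setL: "set L = range e" by (simp add: L_def)
  have spanL: "UNIV \<subseteq> V.span (set L)"
  proof
    fix v :: "'n \<Rightarrow> 'a"
    have "v = (\<Sum>i\<in>UNIV. fscale (v i) (e i))"
    proof (rule ext)
      fix j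
      have "(\<Sum>i\<in>UNIV. fscale (v i) (e i)) j = (\<Sum>i\<in>UNIV. fscale (v i) (e i) j)"
        by (rule sum_apply)
      also have "\<dots> = (\<Sum>i\<in>UNIV. if i = j then v j else 0)"
        by (rule sum.cong) (auto simp: fscale_def e_def)
      finally show "v j = (\<Sum>i\<in>UNIV. fscale (v i) (e i)) j" by simp
    qed
    also have "\<dots> \<in> V.span (set L)"
      apply (rule V.span_sum) apply (rule V.span_scale) apply (rule V.span_base) by (simp add: setL)
    finally show "v \<in> V.span (set L)" .
  qed
  have ind: "V.independent (set xs)" and dxs: "distinct xs" using li by (auto simp: lin_indep_list_def)
  obtain B where B: "set xs \<subseteq> B" "V.independent B" "UNIV \<subseteq> V.span B"
    using V.maximal_independent_subset_extend[of "set xs" UNIV] ind by auto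
  have finB: "finite B" and cardB: "card B \<le> card (set L)"
    using V.independent_span_bound[OF _ B(2), of "set L"] spanL by auto
  have indL: "V.independent (set L)" and dL: "distinct L" using liL by (auto simp: lin_indep_list_def)
  have "card (set L) \<le> card B" using V.independent_span_bound[OF finB indL] B(3) by auto
  obtain ys where ys: "set ys = B - set xs" "distinct ys" using finite_distinct_list[of "B - set xs"] finB by auto
  define full where "full = ys @ xs"
  have setfull: "set full = B" using ys B(1) by (auto simp: full_def)
  have dfull: "distinct full" using ys dxs by (auto simp: full_def)
  have lenfull: "length full = length L"
    using distinct_card[OF dfull] distinct_card[OF dL] setfull cardB \<open>card (set L) \<le> card B\<close> by simp
  obtain c where c: "wedge_list L = fscale c (wedge_list full)"
    using LD[of L full] lenfull setfull B(3) by auto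
  show "wedge_list xs \<noteq> 0"
  proof
    assume "wedge_list xs = 0"
    then have "wedge_list full = 0" by (simp add: full_def wl_append)
    then show False using c WLnz by simp
  qed
qed

lemma V_of_wedge: "lin_indep_list xs \<Longrightarrow> V_of (wedge_list xs) = V.span (set (xs :: ('n::{finite,linorder} \<Rightarrow> 'a::field) list))"
proof
  assume li: "lin_indep_list xs"
  show "V_of (wedge_list xs) \<subseteq> V.span (set xs)"
  proof
    fix v assume "v \<in> V_of (wedge_list xs)"
    then have "wedge_list (v # xs) = 0" by (simp add: V_of_def)
    then have "\<not> lin_indep_list (v # xs)" using W_nz_iff by blast
    then show "v \<in> V.span (set xs)" using li lil_Cons by blast
  qed
next
  show "V.span (set xs) \<subseteq> V_of (wedge_list xs)" by (auto simp: V_of_def F5)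
qed

definition omit :: "nat \<Rightarrow> 'x list \<Rightarrow> 'x list" where "omit i xs = take i xs @ drop (Suc i) xs"

lemma omit_0[simp]: "omit 0 (h # hs) = hs" by (simp add: omit_def)
lemma omit_Suc[simp]: "omit (Suc j) (h # hs) = h # omit j hs" by (simp add: omit_def)

lemma wv_sum_right: "wedge_vec v (\<Sum>i\<in>A. f i) = (\<Sum>i\<in>A. wedge_vec v (f i))"
  by (induction A rule: infinite_finite_induct) (auto simp: wv_add_right)

lemma foldr_sum: "foldr wedge_vec us (\<Sum>i\<in>A. f i) = (\<Sum>i\<in>A. foldr wedge_vec us (f i))"
  by (induction A rule: infinite_finite_induct) (auto simp: foldr_add)

fun shear :: "('n \<Rightarrow> 'a::field) \<Rightarrow> (nat \<Rightarrow> 'a) \<Rightarrow> ('n \<Rightarrow> 'a) list \<Rightarrow> ('n \<Rightarrow> 'a) list" where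
  "shear g a [] = []"
| "shear g a (h # hs) = (h + fscale (a 0) g) # shear g (\<lambda>j. a (Suc j)) hs"

lemma length_shear[simp]: "length (shear g a hs) = length hs"
  by (induction hs arbitrary: a) auto

lemma set_shear: "set (shear g a hs) \<subseteq> V.span (insert g (set hs))"
proof (induction hs arbitrary: a)
  case (Cons h hs)
  have "h + fscale (a 0) g \<in> V.span (insert g (set (h # hs)))"
    by (intro V.span_add V.span_scale V.span_base) auto
  moreover have "V.span (insert g (set hs)) \<subseteq> V.span (insert g (set (h # hs)))"
    by (rule V.span_mono) auto
  ultimately show ?case using Cons[of "\<lambda>j. a (Suc j)"] by auto
qed simp

lemma SH: "wedge_list (shear g a hs) = wedge_list hs +
   (\<Sum>j<length hs. fscale ((-1)^j * a j) (wedge_vec g (wedge_list (omit j hs)))) "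
proof (induction hs arbitrary: a)
  case Nil then show ?case by simp
next
  case (Cons h hs)
  define S where "S = (\<Sum>j<length hs. fscale ((-1)^j * a (Suc j)) (wedge_vec g (wedge_list (omit j hs))))"
  have IH: "wedge_list (shear g (\<lambda>j. a (Suc j)) hs) = wedge_list hs + S" using Cons.IH S_def by simp
  have e1: "wedge_vec h S = (\<Sum>j<length hs. fscale ((-1)^Suc j * a (Suc j)) (wedge_vec g (wedge_list (omit (Suc j) (h#hs)))))"
    unfolding S_def wv_sum_right by (rule sum.cong) (auto simp: wv_scale_right wv_anti[of h g])
  have e2: "wedge_vec g S = 0" unfolding S_def wv_sum_right by (simp add: wv_scale_right wv_alt)
  have "wedge_list (shear g a (h#hs)) = wedge_vec (h + fscale (a 0) g) (wedge_list hs + S)" using IH by simp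
  also have "\<dots> = wedge_vec h (wedge_list hs) + wedge_vec h S + (fscale (a 0) (wedge_vec g (wedge_list hs)) + fscale (a 0) (wedge_vec g S))"
    by (simp add: wv_add_left wv_add_right wv_scale_left)
  also have "\<dots> = wedge_list (h#hs) + (fscale ((-1)^0 * a 0) (wedge_vec g (wedge_list (omit 0 (h#hs)))) +
      (\<Sum>j<length hs. fscale ((-1)^Suc j * a (Suc j)) (wedge_vec g (wedge_list (omit (Suc j) (h#hs))))))"
    unfolding e1 e2 by (simp add: add_ac)
  also have "\<dots> = wedge_list (h#hs) + (\<Sum>j<length (h#hs). fscale ((-1)^j * a j) (wedge_vec g (wedge_list (omit j (h#hs)))))"
    unfolding length_Cons sum.lessThan_Suc_shift by (rule refl)
  finally show ?case .
qed

lemma TII: "\<exists>a ws. length ws = length gs - 1 \<and> set ws \<subseteq> V.span (set gs) \<and>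
  (\<Sum>i<length gs. fscale (c i) (wedge_list (omit i gs))) = fscale a (wedge_list ws :: 'n::{finite,linorder} set \<Rightarrow> 'a::field)"
proof (induction gs arbitrary: c)
  case Nil then show ?case by (intro exI[of _ 0] exI[of _ "[]"]) simp
next
  case (Cons g gs)
  have split: "(\<Sum>i<length (g#gs). fscale (c i) (wedge_list (omit i (g#gs)))) =
     fscale (c 0) (wedge_list gs) + wedge_vec g (\<Sum>i<length gs. fscale (c (Suc i)) (wedge_list (omit i gs)))"
    unfolding length_Cons sum.lessThan_Suc_shift by (simp add: wv_sum_right wv_scale_right)
  show ?case
  proof (cases "gs = []")
    case True then show ?thesis by (intro exI[of _ "c 0"] exI[of _ "[]"]) simp
  next
    case gsne: False
    show ?thesis
    proof (cases "c 0 = 0")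
      case True
      obtain a ws where ws: "length ws = length gs - 1" "set ws \<subseteq> V.span (set gs)"
        "(\<Sum>i<length gs. fscale (c (Suc i)) (wedge_list (omit i gs))) = fscale a (wedge_list ws)"
        using Cons.IH[of "\<lambda>i. c (Suc i)"] by blast
      have "V.span (set gs) \<subseteq> V.span (set (g # gs))" by (rule V.span_mono) auto
      moreover have "g \<in> V.span (set (g # gs))" by (rule V.span_base) simp
      ultimately have "set (g # ws) \<subseteq> V.span (set (g # gs))" using ws(2) by auto
      moreover have "length (g # ws) = length (g # gs) - 1" using ws(1) gsne by (cases gs) auto
      moreover have "(\<Sum>i<length (g#gs). fscale (c i) (wedge_list (omit i (g#gs)))) = fscale a (wedge_list (g # ws))"
        unfolding split by (simp add: True ws(3) wv_scale_right)
      ultimately show ?thesis by blast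
    next
      case False
      define \<alpha> where "\<alpha> = (\<lambda>j. (-1)^j * c (Suc j) / c 0)"
      have co: "c 0 * ((-1)^j * \<alpha> j) = c (Suc j)" for j
      proof -
        have "((-1::'a)^j * (-1)^j) = 1" by (simp add: power_mult_distrib[symmetric])
        then show ?thesis using False unfolding \<alpha>_def by (simp add: field_simps)
      qed
      have "set (shear g \<alpha> gs) \<subseteq> V.span (set (g # gs))" using set_shear by simp
      moreover have "fscale (c 0) (wedge_list (shear g \<alpha> gs)) =
          (\<Sum>i<length (g#gs). fscale (c i) (wedge_list (omit i (g#gs))))"
        unfolding split SH V.scale_right_distrib V.scale_sum_right wv_sum_right
        by (simp add: wv_scale_right co)
      ultimately show ?thesis
        by (intro exI[of _ "c 0"] exI[of _ "shear g \<alpha> gs"]) simp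
    qed
  qed
qed

lemma span_image_sum: "x \<in> V.span (F ` {..<(r::nat)}) \<Longrightarrow> \<exists>c. x = (\<Sum>i<r. fscale (c i) (F i :: 'b \<Rightarrow> 'a::field))"
proof (induction rule: V.span_induct_alt)
  case base then show ?case by (intro exI[of _ "\<lambda>_. 0"]) simp
next
  case (step d x y)
  then obtain k c where k: "k < r" "x = F k" and c: "y = (\<Sum>i<r. fscale (c i) (F i))" by auto
  have "fscale d x + y = (\<Sum>i<r. fscale ((c(k := c k + d)) i) (F i))"
  proof -
    have D: "(\<Sum>i<r. if i = k then fscale d (F i) else 0) = (\<Sum>i\<in>{k}. fscale d (F i))"
      by (rule sum.mono_neutral_cong_right) (use k in auto)
    have "(\<Sum>i<r. fscale ((c(k := c k + d)) i) (F i)) = (\<Sum>i<r. fscale (c i) (F i) + (if i = k then fscale d (F i) else 0))"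
      by (rule sum.cong) (auto simp: V.scale_left_distrib)
    also have "\<dots> = y + (\<Sum>i<r. if i = k then fscale d (F i) else 0)" by (simp add: sum.distrib c)
    also have "\<dots> = y + fscale d (F k)" unfolding D by simp
    finally show ?thesis using k by (simp add: add.commute)
  qed
  then show ?case by blast
qed

lemma wl_last: "wedge_list (fs @ [x]) = foldr wedge_vec fs (wedge_vec x ext_one)"
  by (simp add: wl_append)

lemma REP_I: "\<omega> \<in> V.span {wedge_list (fs @ [gs ! i]) | i. i < r} \<Longrightarrow> length gs = r \<Longrightarrow>
   \<exists>g \<in> V.span (set gs). \<omega> = wedge_list (fs @ [g] :: ('n::{finite,linorder} \<Rightarrow> 'a::field) list)"
proof (induction rule: V.span_induct_alt)
  case base then show ?case by (intro bexI[of _ 0]) (auto simp: wl_last V.span_zero)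
next
  case (step c x y)
  then obtain i where i: "i < r" "x = wedge_list (fs @ [gs ! i])" by auto
  obtain g where g: "g \<in> V.span (set gs)" "y = wedge_list (fs @ [g])" using step by auto
  have "fscale c x + y = wedge_list (fs @ [fscale c (gs ! i) + g])"
    by (simp add: i g wl_last wv_add_left wv_scale_left foldr_add foldr_scale)
  moreover have "gs ! i \<in> set gs" using i step.prems by simp
  then have "fscale c (gs ! i) + g \<in> V.span (set gs)"
    by (rule V.span_add[OF V.span_scale[OF V.span_base] g(1)])
  ultimately show ?case by blast
qed

lemma REP_II: assumes "\<omega> \<in> V.span {wedge_list (us @ take i gs @ drop (Suc i) gs) | i. i < r}" "length gs = r" "1 \<le> r"
  shows "\<exists>a ws. length ws = r - 1 \<and> set ws \<subseteq> V.span (set gs) \<and>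
     \<omega> = fscale a (wedge_list (us @ ws :: ('n::{finite,linorder} \<Rightarrow> 'a::field) list))"
proof -
  have "{wedge_list (us @ take i gs @ drop (Suc i) gs) | i. i < r} = (\<lambda>i. wedge_list (us @ omit i gs)) ` {..<r}"
    by (auto simp: omit_def)
  then obtain c where c: "\<omega> = (\<Sum>i<r. fscale (c i) (wedge_list (us @ omit i gs)))"
    using span_image_sum assms(1) by metis
  obtain a ws where ws: "length ws = length gs - 1" "set ws \<subseteq> V.span (set gs)"
     "(\<Sum>i<length gs. fscale (c i) (wedge_list (omit i gs))) = fscale a (wedge_list ws)"
    using TII by blast
  have "\<omega> = foldr wedge_vec us (\<Sum>i<length gs. fscale (c i) (wedge_list (omit i gs)))"
    unfolding c foldr_sum assms(2) by (simp add: wl_append foldr_scale)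
  also have "\<dots> = fscale a (wedge_list (us @ ws))" by (simp add: ws(3) foldr_scale wl_append)
  finally show ?thesis using ws assms(2) by blast
qed




lemma dec_of_rep: assumes "1 \<le> l" "\<forall>\<omega>\<in>E. \<exists>a xs. length xs = l \<and> \<omega> = fscale a (wedge_list xs)"
  shows "decomposable_subspace l (E :: ('n::{finite,linorder} set \<Rightarrow> 'a::field) set)"
  unfolding decomposable_subspace_def decomposable_def
proof (intro ballI impI conjI)
  fix \<omega> assume w: "\<omega> \<in> E" "\<omega> \<noteq> 0"
  then obtain a xs where xs: "length xs = l" "\<omega> = fscale a (wedge_list xs)" using assms(2) by blast
  then obtain x xt where xt: "xs = x # xt" using assms(1) by (cases xs) auto
  have "\<omega> = wedge_list (fscale a x # xt)" by (simp add: xs(2) xt wv_scale_left)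
  moreover have "length (fscale a x # xt) = l" using xs xt by simp
  ultimately show "\<exists>vs. length vs = l \<and> \<omega> = wedge_list vs" by blast
qed (use assms in auto)

lemma VOF_rep: assumes "\<omega> = fscale a (wedge_list xs)" "\<omega> \<noteq> 0"
  shows "V_of \<omega> = V.span (set (xs :: ('n::{finite,linorder} \<Rightarrow> 'a::field) list))" "lin_indep_list xs"
proof -
  have a: "a \<noteq> 0" and W: "wedge_list xs \<noteq> 0" using assms by auto
  then show li: "lin_indep_list xs" using W_nz_iff by blast
  show "V_of \<omega> = V.span (set xs)" by (simp only: assms(1) V_of_scale[OF a] V_of_wedge[OF li])
qed

lemma Vlow_B: assumes "V.span B = E"
  shows "V_low E = (\<Inter>\<omega>\<in>B. V_of (\<omega> :: 'n::{finite,linorder} set \<Rightarrow> 'a::field))"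
proof
  show "V_low E \<subseteq> (\<Inter>\<omega>\<in>B. V_of \<omega>)" unfolding V_low_def using assms V.span_base by blast
next
  show "(\<Inter>\<omega>\<in>B. V_of \<omega>) \<subseteq> V_low E"
  proof
    fix v assume v: "v \<in> (\<Inter>\<omega>\<in>B. V_of \<omega>)"
    have "wedge_vec v \<omega> = 0" if "\<omega> \<in> V.span B" for \<omega>
      using that
    proof (induction rule: V.span_induct_alt)
      case (step c x y) then show ?case using v by (simp add: wv_add_right wv_scale_right V_of_def)
    qed simp
    then show "v \<in> V_low E" using assms by (auto simp: V_low_def V_of_def)
  qed
qed

lemma Vup_ge: assumes "V.independent B" "V.span B = E"
  shows "V.span (\<Union>\<omega>\<in>B. V_of \<omega>) \<subseteq> V_up (E :: ('n::{finite,linorder} set \<Rightarrow> 'a::field) set)"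
proof -
  have "0 \<notin> B" using assms(1) V.dependent_zero by blast
  then have "B \<subseteq> E - {0}" using assms(2) V.span_base by blast
  then show ?thesis unfolding V_up_def by (intro V.span_mono) blast
qed

lemma Vup_le: assumes "\<forall>\<omega>\<in>E - {0}. V_of \<omega> \<subseteq> V.span X"
  shows "V_up (E :: ('n::{finite,linorder} set \<Rightarrow> 'a::field) set) \<subseteq> V.span X"
  unfolding V_up_def using assms by (intro V.span_minimal) auto

lemma REPZ: assumes I: "V.independent I" and A: "A \<subseteq> I" and v: "v \<in> V.span I"
  and C: "\<forall>b\<in>I - A. \<exists>C. C \<subseteq> I \<and> b \<notin> C \<and> v \<in> V.span C"
  shows "v \<in> V.span (A :: ('n \<Rightarrow> 'a::field) set)"
proof -
  define R where "R = V.representation I v"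
  have sup: "{b. R b \<noteq> 0} \<subseteq> A"
  proof
    fix b assume b: "b \<in> {b. R b \<noteq> 0}"
    then have bI: "b \<in> I" using V.representation_ne_zero unfolding R_def by auto
    show "b \<in> A"
    proof (rule ccontr)
      assume "b \<notin> A"
      then obtain C' where C': "C' \<subseteq> I" "b \<notin> C'" "v \<in> V.span C'" using C bI by blast
      have "R = V.representation C' v" unfolding R_def by (rule V.representation_extend[OF I C'(3) C'(1)])
      then have "V.representation C' v b \<noteq> 0" using b by simp
      then have "b \<in> C'" using V.representation_ne_zero by blast
      then show False using C' by blast
    qed
  qed
  have "v = (\<Sum>b | R b \<noteq> 0. fscale (R b) b)"
    unfolding R_def using V.sum_nonzero_representation_eq[OF I v] by simp
  also have "\<dots> \<in> V.span A"
    using sup by (intro V.span_sum V.span_scale) (auto intro: V.span_base)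
  finally show ?thesis .
qed

lemma NOTSPAN: assumes "V.independent I" "C \<subseteq> I" "b \<in> I" "b \<notin> C"
  shows "b \<notin> V.span (C :: ('n \<Rightarrow> 'a::field) set)"
proof
  assume "b \<in> V.span C"
  moreover have "V.span C \<subseteq> V.span (I - {b})" using assms by (intro V.span_mono) auto
  ultimately have "V.dependent I" using assms(3) V.dependent_def by blast
  then show False using assms(1) by simp
qed

lemma lil_sub: "lin_indep_list xs \<Longrightarrow> distinct ys \<Longrightarrow> set ys \<subseteq> set xs \<Longrightarrow> lin_indep_list ys"
  unfolding lin_indep_list_def using V.independent_mono by blast

lemma omit_facts: assumes "distinct gs" "i < length gs"
  shows "distinct (omit i gs)" "set (omit i gs) = set gs - {gs ! i}"
proof -
  have d: "distinct (take i gs @ gs ! i # drop (Suc i) gs)" using assms id_take_nth_drop by metis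
  then show "distinct (omit i gs)" by (simp add: omit_def)
  have "set gs = set (take i gs @ gs ! i # drop (Suc i) gs)" using assms id_take_nth_drop by metis
  then show "set (omit i gs) = set gs - {gs ! i}" using d by (auto simp: omit_def)
qed

lemma K2: assumes li: "lin_indep_list Us" "length Us = Suc l"
  and rep: "\<forall>\<omega>\<in>E. \<exists>a xs. length xs = l \<and> set xs \<subseteq> V.span (set Us) \<and> \<omega> = fscale a (wedge_list xs)"
  and b: "b \<in> E" "b \<noteq> 0" "b' \<in> E" "b' \<noteq> 0" "b' \<notin> V.span {b}"
  shows "V.span (set Us) \<subseteq> V.span (V_of b \<union> V_of (b' :: 'n::{finite,linorder} set \<Rightarrow> 'a::field))"
proof -
  obtain a xs where xs: "length xs = l" "set xs \<subseteq> V.span (set Us)" "b = fscale a (wedge_list xs)"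
    using rep b by blast
  obtain a' xs' where xs': "length xs' = l" "set xs' \<subseteq> V.span (set Us)" "b' = fscale a' (wedge_list xs')"
    using rep b by blast
  have a: "a \<noteq> 0" using xs(3) b(2) by auto
  have Vb: "V_of b = V.span (set xs)" and lixs: "lin_indep_list xs" using VOF_rep[OF xs(3) b(2)] by auto
  have Vb': "V_of b' = V.span (set xs')" using VOF_rep[OF xs'(3) b(4)] by auto
  have "\<not> set xs' \<subseteq> V.span (set xs)"
  proof
    assume "set xs' \<subseteq> V.span (set xs)"
    then obtain c where c: "wedge_list xs' = fscale c (wedge_list xs)" using LD[of xs' xs] xs xs' by auto
    have "b' = fscale (a' * c / a) b" using a by (simp add: xs(3) xs'(3) c)
    then have "b' \<in> V.span {b}" by (simp add: V.span_scale V.span_base)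
    then show False using b(5) by simp
  qed
  then obtain x' where x': "x' \<in> set xs'" "x' \<notin> V.span (set xs)" by blast
  define S where "S = insert x' (set xs)"
  have indxs: "V.independent (set xs)" and dxs: "distinct xs" using lixs by (auto simp: lin_indep_list_def)
  have indS: "V.independent S" unfolding S_def by (rule V.independent_insertI[OF x'(2) indxs])
  have x'n: "x' \<notin> set xs" using x'(2) V.span_base by blast
  have cardS: "card S = Suc l" unfolding S_def using x'n distinct_card[OF dxs] xs(1) by simp
  have finS: "finite S" by (simp add: S_def)
  have SUs: "S \<subseteq> V.span (set Us)" unfolding S_def using xs(2) xs'(2) x'(1) by auto
  have dUs: "distinct Us" and indUs: "V.independent (set Us)" using li by (auto simp: lin_indep_list_def)
  have cUs: "card (set Us) = Suc l" using distinct_card[OF dUs] li(2) by simp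
  have "set Us \<subseteq> V.span S"
  proof
    fix u assume u: "u \<in> set Us"
    show "u \<in> V.span S"
    proof (rule ccontr)
      assume nu: "u \<notin> V.span S"
      then have "V.independent (insert u S)" by (rule V.independent_insertI[OF _ indS])
      moreover have "insert u S \<subseteq> V.span (set Us)" using SUs u V.span_base by blast
      ultimately have "card (insert u S) \<le> card (set Us)" using V.independent_span_bound[of "set Us"] by auto
      moreover have "u \<notin> S" using nu V.span_base by blast
      ultimately show False using cardS cUs finS by simp
    qed
  qed
  then have "V.span (set Us) \<subseteq> V.span S" using V.span_mono V.span_span by blast
  also have "\<dots> \<subseteq> V.span (V_of b \<union> V_of b')"
  proof (rule V.span_mono)
    show "S \<subseteq> V_of b \<union> V_of b'" unfolding S_def Vb Vb' using x'(1) V.span_base by blast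
  qed
  finally show ?thesis .
qed

lemma lin_last_add: "wedge_list (fs @ [x + y]) = wedge_list (fs @ [x]) + (wedge_list (fs @ [y]) :: 'n::{finite,linorder} set \<Rightarrow> 'a::field)"
  by (simp add: wl_last wv_add_left foldr_add)

lemma lin_last_diff: "wedge_list (fs @ [x - y]) = wedge_list (fs @ [x]) - (wedge_list (fs @ [y]) :: 'n::{finite,linorder} set \<Rightarrow> 'a::field)"
  using lin_last_add[of fs "x - y" y] by (simp add: eq_diff_eq)

lemma lin_last_scale: "wedge_list (fs @ [fscale c x]) = fscale c (wedge_list (fs @ [x]) :: 'n::{finite,linorder} set \<Rightarrow> 'a::field)"
  by (simp add: wl_last wv_scale_left foldr_scale)

lemma P2_I: assumes lif: "lin_indep_list fs"
  and rep: "\<forall>\<omega>\<in>E. \<exists>g \<in> V.span (set gs). \<omega> = wedge_list (fs @ [g])"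
  and B: "V.span B = E" "B \<subseteq> E - {0}" "B \<noteq> {}"
  and w: "\<omega> \<in> E" "\<omega> \<noteq> 0"
  shows "V_of \<omega> \<subseteq> V.span (\<Union>b\<in>B. V_of (b :: 'n::{finite,linorder} set \<Rightarrow> 'a::field))"
proof -
  define W where "W = V.span (\<Union>b\<in>B. V_of b)"
  have VofW: "V_of b \<subseteq> W" if "b \<in> B" for b
  proof -
    have "V_of b \<subseteq> (\<Union>b\<in>B. V_of b)" by (rule UN_upper[OF that])
    also have "\<dots> \<subseteq> W" unfolding W_def by (rule V.span_superset)
    finally show ?thesis .
  qed
  have gb: "(\<exists>g\<in>W. b = wedge_list (fs @ [g])) \<and> set fs \<subseteq> W" if "b \<in> B" for b
  proof -
    have bE: "b \<in> E" and b0: "b \<noteq> 0" using that B(2) by auto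
    obtain g where g: "g \<in> V.span (set gs)" "b = wedge_list (fs @ [g])" using rep bE by auto
    have "V_of b = V.span (set (fs @ [g]))" using VOF_rep(1)[of b 1 "fs @ [g]"] g(2) b0 by simp
    then have "set (fs @ [g]) \<subseteq> W" using VofW[OF that] V.span_superset[of "set (fs @ [g])"] by blast
    then show ?thesis using g(2) by auto
  qed
  obtain b0 where "b0 \<in> B" using B(3) by auto
  then have fsW: "set fs \<subseteq> W" using gb by simp
  have key: "\<exists>g\<in>W. x = wedge_list (fs @ [g])" if "x \<in> V.span B" for x
    using that
  proof (induction rule: V.span_induct_alt)
    case base
    have "wedge_list (fs @ [0]) = 0" by (simp add: wl_last)
    moreover have "0 \<in> W" unfolding W_def by (rule V.span_zero)
    ultimately show ?case by metis
  next
    case (step c x y)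
    obtain gx where gx: "gx \<in> W" "x = wedge_list (fs @ [gx])" using gb step(1) by auto
    obtain gy where gy: "gy \<in> W" "y = wedge_list (fs @ [gy])" using step(2) by auto
    have "fscale c x + y = wedge_list (fs @ [fscale c gx + gy])" by (simp add: gx gy lin_last_add lin_last_scale)
    moreover have "fscale c gx + gy \<in> W" unfolding W_def
      by (rule V.span_add[OF V.span_scale]) (use gx gy in \<open>simp_all add: W_def\<close>)
    ultimately show ?case by blast
  qed
  obtain g where g: "g \<in> V.span (set gs)" "\<omega> = wedge_list (fs @ [g])" using rep w(1) by auto
  obtain g' where g': "g' \<in> W" "\<omega> = wedge_list (fs @ [g'])" using key w(1) B(1) by auto
  have "wedge_list (fs @ [g - g']) = 0" using g(2) g'(2) by (simp add: lin_last_diff)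
  then have "wedge_list ((g - g') # fs) = 0" using L1[of fs "g - g'" "[]"] by simp
  then have "\<not> lin_indep_list ((g - g') # fs)" using W_nz_iff by blast
  then have "g - g' \<in> V.span (set fs)" using lif lil_Cons by blast
  also have "V.span (set fs) \<subseteq> W" unfolding W_def by (rule V.span_minimal[OF fsW[unfolded W_def]]) simp
  finally have d: "g - g' \<in> W" .
  have "g = (g - g') + g'" by simp
  then have gW: "g \<in> W" using V.span_add[OF d[unfolded W_def] g'(1)[unfolded W_def]] unfolding W_def by metis
  have "V_of \<omega> = V.span (set (fs @ [g]))" using VOF_rep(1)[of \<omega> 1 "fs @ [g]"] g(2) w(2) by simp
  also have "\<dots> \<subseteq> W" unfolding W_def
    by (rule V.span_minimal) (use fsW gW in \<open>auto simp: W_def\<close>)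
  finally show ?thesis unfolding W_def .
qed

lemma P2_single: assumes "E = V.span {\<omega>0}" "V.span B = E" "V.independent B" "\<omega> \<in> E" "\<omega> \<noteq> 0"
  shows "V_of \<omega> \<subseteq> V.span (\<Union>b\<in>B. V_of (b :: 'n::{finite,linorder} set \<Rightarrow> 'a::field))"
proof -
  obtain k where k: "\<omega> = fscale k \<omega>0" using assms(1,4) V.span_singleton by auto
  have "k \<noteq> 0" using k assms(5) by auto
  then have V1: "V_of \<omega> = V_of \<omega>0" using k V_of_scale by simp
  have "B \<noteq> {}" using assms(2,4,5) by auto
  then obtain b where b: "b \<in> B" by blast
  have "b \<noteq> 0" using b assms(3) V.dependent_zero by blast
  moreover obtain k' where k': "b = fscale k' \<omega>0" using assms(1,2) b V.span_base V.span_singleton by blast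
  ultimately have "k' \<noteq> 0" by auto
  then have "V_of b = V_of \<omega>0" using k' V_of_scale by simp
  then show ?thesis using V1 b V.span_superset by blast
qed


lemma typeI:
  fixes E :: "('n::{finite,linorder} set \<Rightarrow> 'a::field) set"
  assumes l: "1 \<le> l" and cI: "close_I l r E"
  shows "\<forall>\<omega>\<in>E. \<exists>a xs. length xs = l \<and> \<omega> = fscale a (wedge_list xs)"
    and "\<forall>B. V.independent B \<and> V.span B = E \<longrightarrow> (\<forall>\<omega>\<in>E - {0}. V_of \<omega> \<subseteq> V.span (\<Union>b\<in>B. V_of b))"
    and "r > 1 \<Longrightarrow> V.dim (V_low E) = l - 1 \<and> V.dim (V_up E) = l + r - 1"
proof -
  obtain fs gs where fs: "length fs = l - 1" "length gs = r" "lin_indep_list (fs @ gs)"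
      "E = V.span {wedge_list (fs @ [gs ! i]) | i. i < r}"
    using cI unfolding close_I_def by blast
  have dfg: "distinct (fs @ gs)" and ind: "V.independent (set (fs @ gs))" using fs(3) by (auto simp: lin_indep_list_def)
  have lif: "lin_indep_list fs" by (rule lil_sub[OF fs(3)]) (use dfg in auto)
  have gsi: "gs ! i \<in> set gs" "gs ! i \<notin> set fs" if "i < r" for i
    using that fs(2) dfg by auto
  have liw: "lin_indep_list (fs @ [gs ! i])" if "i < r" for i
    by (rule lil_sub[OF fs(3)]) (use dfg gsi[OF that] in auto)
  define \<omega> where "\<omega> i = wedge_list (fs @ [gs ! i])" for i
  have \<omega>E: "\<omega> i \<in> E" if "i < r" for i unfolding fs(4) \<omega>_def by (rule V.span_base) (use that in blast)
  have \<omega>nz: "\<omega> i \<noteq> 0" if "i < r" for i unfolding \<omega>_def using W_nz_iff liw[OF that] by blast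
  have V\<omega>: "V_of (\<omega> i) = V.span (insert (gs ! i) (set fs))" if "i < r" for i
    unfolding \<omega>_def using V_of_wedge[OF liw[OF that]] by simp
  have rep: "\<forall>\<omega>\<in>E. \<exists>g\<in>V.span (set gs). \<omega> = wedge_list (fs @ [g])"
  proof
    fix w assume "w \<in> E"
    then show "\<exists>g\<in>V.span (set gs). w = wedge_list (fs @ [g])" using REP_I[of w fs gs r] fs(2,4) by simp
  qed
  show "\<forall>\<omega>\<in>E. \<exists>a xs. length xs = l \<and> \<omega> = fscale a (wedge_list xs)"
  proof
    fix w assume "w \<in> E"
    then obtain g where "w = wedge_list (fs @ [g])" using rep by blast
    moreover have "length (fs @ [g]) = l" using fs(1) l by simp
    ultimately show "\<exists>a xs. length xs = l \<and> w = fscale a (wedge_list xs)"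
      by (intro exI[of _ 1] exI[of _ "fs @ [g]"]) simp
  qed
  show "\<forall>B. V.independent B \<and> V.span B = E \<longrightarrow> (\<forall>\<omega>\<in>E - {0}. V_of \<omega> \<subseteq> V.span (\<Union>b\<in>B. V_of b))"
  proof (intro allI impI ballI)
    fix B w assume B: "V.independent B \<and> V.span B = E" and w: "w \<in> E - {0}"
    have "0 \<notin> B" using B V.dependent_zero by blast
    then have BE: "B \<subseteq> E - {0}" using B V.span_base by blast
    have "B \<noteq> {}" using B w by auto
    then show "V_of w \<subseteq> V.span (\<Union>b\<in>B. V_of b)" using P2_I[OF lif rep _ BE, of w] B w by simp
  qed
  assume r: "r > 1"
  have "V_low E = V.span (set fs)"
  proof
    show "V_low E \<subseteq> V.span (set fs)"
    proof
      fix v assume v: "v \<in> V_low E"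
      have vw: "v \<in> V_of (\<omega> i)" if "i < r" for i using v \<omega>E[OF that] by (auto simp: V_low_def)
      show "v \<in> V.span (set fs)"
      proof (rule REPZ[OF ind])
        show "set fs \<subseteq> set (fs @ gs)" by auto
        have "insert (gs ! 0) (set fs) \<subseteq> set (fs @ gs)" using gsi[of 0] r by auto
        then have "V.span (insert (gs ! 0) (set fs)) \<subseteq> V.span (set (fs @ gs))" by (rule V.span_mono)
        then have "V_of (\<omega> 0) \<subseteq> V.span (set (fs @ gs))" using V\<omega>[of 0] r by simp
        then show "v \<in> V.span (set (fs @ gs))" using vw[of 0] r by auto
        show "\<forall>b\<in>set (fs @ gs) - set fs. \<exists>C. C \<subseteq> set (fs @ gs) \<and> b \<notin> C \<and> v \<in> V.span C"
        proof
          fix b assume b: "b \<in> set (fs @ gs) - set fs"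
          then have "b \<in> set gs" by (metis DiffE Un_iff set_append)
          then obtain j where j: "j < r" "b = gs ! j" using fs(2) by (metis in_set_conv_nth)
          define i where "i = (if j = 0 then 1 else (0::nat))"
          have i: "i < r" "i \<noteq> j" using r by (auto simp: i_def)
          have "distinct gs" using dfg by simp
          then have "gs ! j \<noteq> gs ! i" using i j fs(2) by (simp add: nth_eq_iff_index_eq)
          then have "b \<notin> insert (gs ! i) (set fs)" using b j by auto
          moreover have "insert (gs ! i) (set fs) \<subseteq> set (fs @ gs)" using gsi[OF i(1)] by auto
          moreover have "v \<in> V.span (insert (gs ! i) (set fs))" using vw[OF i(1)] V\<omega>[OF i(1)] by simp
          ultimately show "\<exists>C. C \<subseteq> set (fs @ gs) \<and> b \<notin> C \<and> v \<in> V.span C" by blast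
        qed
      qed
    qed
  next
    show "V.span (set fs) \<subseteq> V_low E"
    proof
      fix v assume v: "v \<in> V.span (set fs)"
      have "v \<in> V_of w" if wE: "w \<in> E" for w
      proof -
        obtain g where g: "w = wedge_list (fs @ [g])" using rep[rule_format, OF wE] by blast
        have "set fs \<subseteq> set (fs @ [g])" by auto
        then have "V.span (set fs) \<subseteq> V.span (set (fs @ [g]))" by (rule V.span_mono)
        then have "v \<in> V.span (set (fs @ [g]))" using v by (rule subsetD)
        then have "wedge_vec v (wedge_list (fs @ [g])) = 0" by (rule F5)
        then show ?thesis unfolding V_of_def g by simp
      qed
      then show "v \<in> V_low E" unfolding V_low_def by (rule INT_I)
    qed
  qed
  moreover have "V_up E = V.span (set (fs @ gs))"
  proof
    show "V_up E \<subseteq> V.span (set (fs @ gs))"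
    proof (rule Vup_le, rule ballI)
      fix w assume w: "w \<in> E - {0}"
      then obtain g where g: "g \<in> V.span (set gs)" "w = wedge_list (fs @ [g])" using rep by blast
      have "V_of w = V.span (set (fs @ [g]))" using VOF_rep(1)[of w 1 "fs @ [g]"] g w by simp
      also have "\<dots> \<subseteq> V.span (set (fs @ gs))"
      proof (rule V.span_minimal)
        have "V.span (set gs) \<subseteq> V.span (set (fs @ gs))" by (rule V.span_mono) auto
        then show "set (fs @ [g]) \<subseteq> V.span (set (fs @ gs))" using g(1) V.span_superset[of "set (fs @ gs)"] by auto
      qed simp
      finally show "V_of w \<subseteq> V.span (set (fs @ gs))" .
    qed
  next
    show "V.span (set (fs @ gs)) \<subseteq> V_up E"
      unfolding V_up_def
    proof (rule V.span_mono)
      show "set (fs @ gs) \<subseteq> (\<Union>w\<in>E - {0}. V_of w)"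
      proof
        fix x assume x: "x \<in> set (fs @ gs)"
        show "x \<in> (\<Union>w\<in>E - {0}. V_of w)"
        proof (cases "x \<in> set fs")
          case True
          then have "x \<in> V_of (\<omega> 0)" using V\<omega>[of 0] r V.span_base[of x "insert (gs ! 0) (set fs)"] by simp
          then show ?thesis using \<omega>E[of 0] \<omega>nz[of 0] r by auto
        next
          case False
          then have "x \<in> set gs" using x by (metis Un_iff set_append)
          then obtain i where i: "i < r" "x = gs ! i" using fs(2) by (metis in_set_conv_nth)
          then have "x \<in> V_of (\<omega> i)" using V\<omega>[OF i(1)] V.span_base[of x "insert (gs ! i) (set fs)"] by simp
          then show ?thesis using \<omega>E[OF i(1)] \<omega>nz[OF i(1)] by auto
        qed
      qed
    qed
  qed
  moreover have "V.dim (V.span (set fs)) = l - 1"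
    using V.dim_span_eq_card_independent[of "set fs"] lif distinct_card[of fs] fs(1)
    by (simp add: lin_indep_list_def)
  moreover have "V.dim (V.span (set (fs @ gs))) = l + r - 1"
    using V.dim_span_eq_card_independent[OF ind] distinct_card[OF dfg] fs(1,2) l by simp
  ultimately show "V.dim (V_low E) = l - 1 \<and> V.dim (V_up E) = l + r - 1" by simp
qed


lemma typeII:
  fixes E :: "('n::{finite,linorder} set \<Rightarrow> 'a::field) set"
  assumes l: "1 \<le> l" and cII: "close_II l r E" and dimE: "V.dim E = r"
  shows "\<forall>\<omega>\<in>E. \<exists>a xs. length xs = l \<and> \<omega> = fscale a (wedge_list xs)"
    and "\<forall>B. V.independent B \<and> V.span B = E \<longrightarrow> (\<forall>\<omega>\<in>E - {0}. V_of \<omega> \<subseteq> V.span (\<Union>b\<in>B. V_of b))"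
    and "r > 1 \<Longrightarrow> V.dim (V_low E) = l + 1 - r \<and> V.dim (V_up E) = l + 1"
proof -
  obtain us gs where us: "int (length us) = int l - int r + 1" "length gs = r" "lin_indep_list (us @ gs)"
      "E = V.span {wedge_list (us @ take i gs @ drop (Suc i) gs) | i. i < r}"
    using cII unfolding close_II_def by blast
  have lenus: "length us + r = l + 1" using us(1,2) by linarith
  define Us where "Us = us @ gs"
  have lenUs: "length Us = Suc l" using lenus us(2) by (simp add: Us_def)
  have liUs: "lin_indep_list Us" using us(3) by (simp add: Us_def)
  have dUs: "distinct (us @ gs)" and ind: "V.independent (set (us @ gs))" using us(3) by (auto simp: lin_indep_list_def)
  have dgs: "distinct gs" and dus: "distinct us" and disj: "set us \<inter> set gs = {}" using dUs by auto
  define \<omega> where "\<omega> i = wedge_list (us @ omit i gs)" for i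
  have gen: "{wedge_list (us @ take i gs @ drop (Suc i) gs) | i. i < r} = {\<omega> i | i. i < r}"
    by (simp add: \<omega>_def omit_def)
  have Eeq: "E = V.span {\<omega> i | i. i < r}" using us(4) gen by simp
  have \<omega>E: "\<omega> i \<in> E" if ir: "i < r" for i unfolding Eeq by (rule V.span_base) (use ir in blast)
  have setom: "set (omit i gs) = set gs - {gs ! i}" "distinct (omit i gs)" if ir: "i < r" for i
    using omit_facts[OF dgs, of i] ir us(2) by auto
  have liw: "lin_indep_list (us @ omit i gs)" if ir: "i < r" for i
  proof (rule lil_sub[OF us(3)])
    show "distinct (us @ omit i gs)" using setom[OF ir] dus disj by auto
    show "set (us @ omit i gs) \<subseteq> set (us @ gs)" using setom[OF ir] by auto
  qed
  have \<omega>nz: "\<omega> i \<noteq> 0" if ir: "i < r" for i unfolding \<omega>_def using W_nz_iff liw[OF ir] by blast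
  have V\<omega>: "V_of (\<omega> i) = V.span (set us \<union> (set gs - {gs ! i}))" if ir: "i < r" for i
    unfolding \<omega>_def using V_of_wedge[OF liw[OF ir]] setom[OF ir] by simp
  have rep1: "\<exists>a ws. length ws = r - 1 \<and> set ws \<subseteq> V.span (set gs) \<and> w = fscale a (wedge_list (us @ ws))"
    if wE: "w \<in> E" and r1: "1 \<le> r" for w
    using REP_II[of w us gs r] wE us(2,4) r1 by simp
  have rep2: "\<exists>a xs. length xs = l \<and> set xs \<subseteq> V.span (set Us) \<and> w = fscale a (wedge_list xs)"
    if wE: "w \<in> E" for w
  proof (cases "r = 0")
    case True
    then have "E = {0}" using Eeq by simp
    then have "w = fscale 0 (wedge_list (replicate l (0 :: 'n \<Rightarrow> 'a)))" using wE by simp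
    moreover have "set (replicate l (0 :: 'n \<Rightarrow> 'a)) \<subseteq> V.span (set Us)" using V.span_zero by auto
    ultimately show ?thesis by (intro exI[of _ 0] exI[of _ "replicate l 0"]) simp
  next
    case False
    then obtain a ws where ws: "length ws = r - 1" "set ws \<subseteq> V.span (set gs)" "w = fscale a (wedge_list (us @ ws))"
      using rep1[OF wE] by auto
    have "V.span (set gs) \<subseteq> V.span (set Us)" by (rule V.span_mono) (auto simp: Us_def)
    moreover have "set us \<subseteq> V.span (set Us)" using V.span_superset[of "set Us"] by (auto simp: Us_def)
    ultimately have "set (us @ ws) \<subseteq> V.span (set Us)" using ws(2) by auto
    moreover have "length (us @ ws) = l" using ws(1) lenus False by simp
    ultimately show ?thesis using ws(3) by blast
  qed
  show "\<forall>\<omega>\<in>E. \<exists>a xs. length xs = l \<and> \<omega> = fscale a (wedge_list xs)"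
    using rep2 by blast
  have VsubUs: "V_of w \<subseteq> V.span (set Us)" if wE: "w \<in> E" and w0: "w \<noteq> 0" for w
  proof -
    obtain a xs where xs: "length xs = l" "set xs \<subseteq> V.span (set Us)" "w = fscale a (wedge_list xs)"
      using rep2[OF wE] by blast
    have "V_of w = V.span (set xs)" using VOF_rep(1)[OF xs(3) w0] .
    also have "\<dots> \<subseteq> V.span (set Us)" by (rule V.span_minimal[OF xs(2)]) simp
    finally show ?thesis .
  qed
  have \<omega>01: "\<omega> 1 \<notin> V.span {\<omega> 0}" if r: "r > 1"
  proof
    assume "\<omega> 1 \<in> V.span {\<omega> 0}"
    then obtain k where k: "\<omega> 1 = fscale k (\<omega> 0)" using V.span_singleton by auto
    have "k \<noteq> 0" using k \<omega>nz[of 1] r by auto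
    then have eqV: "V_of (\<omega> 1) = V_of (\<omega> 0)" using k V_of_scale by simp
    have g01: "gs ! 1 \<noteq> gs ! 0" using dgs r us(2) by (simp add: nth_eq_iff_index_eq)
    have g1: "gs ! 1 \<in> set gs" using r us(2) by simp
    have "gs ! 1 \<in> V_of (\<omega> 0)" using V\<omega>[of 0] r g01 g1 V.span_base[of "gs ! 1" "set us \<union> (set gs - {gs ! 0})"] by simp
    moreover have "gs ! 1 \<notin> V.span (set us \<union> (set gs - {gs ! 1}))"
    proof (rule NOTSPAN[OF ind])
      show "set us \<union> (set gs - {gs ! 1}) \<subseteq> set (us @ gs)" by auto
      show "gs ! 1 \<in> set (us @ gs)" using g1 by simp
      show "gs ! 1 \<notin> set us \<union> (set gs - {gs ! 1})" using g1 disj by auto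
    qed
    ultimately show False using eqV V\<omega>[of 1] r by simp
  qed
  show "\<forall>B. V.independent B \<and> V.span B = E \<longrightarrow> (\<forall>\<omega>\<in>E - {0}. V_of \<omega> \<subseteq> V.span (\<Union>b\<in>B. V_of b))"
  proof (intro allI impI ballI)
    fix B w assume B: "V.independent B \<and> V.span B = E" and w: "w \<in> E - {0}"
    have B0: "0 \<notin> B" using B V.dependent_zero by blast
    have Bne: "B \<noteq> {}" using B w by auto
    show "V_of w \<subseteq> V.span (\<Union>b\<in>B. V_of b)"
    proof (cases "r \<le> 1")
      case True
      have "r \<noteq> 0" using Eeq w by auto
      then have "r = 1" using True by simp
      then have "E = V.span {\<omega> 0}" using Eeq by simp
      then show ?thesis using P2_single[of E "\<omega> 0" B w] B w by blast
    next
      case False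
      obtain b where b: "b \<in> B" using Bne by blast
      have "\<exists>b'\<in>B. b' \<notin> V.span {b}"
      proof (rule ccontr)
        assume "\<not> (\<exists>b'\<in>B. b' \<notin> V.span {b})"
        then have "B \<subseteq> V.span {b}" by blast
        then have "E \<subseteq> V.span {b}" using B V.span_minimal[of B "V.span {b}"] by simp
        then have "V.dim E \<le> card {b}" by (rule V.dim_le_card) simp
        then show False using dimE False by simp
      qed
      then obtain b' where b': "b' \<in> B" "b' \<notin> V.span {b}" by blast
      have bE: "b \<in> E" "b' \<in> E" using b b' B V.span_base by blast+
      have bnz: "b \<noteq> 0" "b' \<noteq> 0" using b b' B0 by auto
      have "V.span (set Us) \<subseteq> V.span (V_of b \<union> V_of b')"
        by (rule K2[OF liUs lenUs _ bE(1) bnz(1) bE(2) bnz(2) b'(2)]) (use rep2 in blast)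
      also have "\<dots> \<subseteq> V.span (\<Union>b\<in>B. V_of b)" by (rule V.span_mono) (use b b' in blast)
      finally show ?thesis using VsubUs[of w] w by blast
    qed
  qed
  assume r: "r > 1"
  have "V_low E = V.span (set us)"
  proof
    show "V_low E \<subseteq> V.span (set us)"
    proof
      fix v assume v: "v \<in> V_low E"
      have vw: "v \<in> V_of (\<omega> i)" if ir: "i < r" for i using v \<omega>E[OF ir] by (auto simp: V_low_def)
      show "v \<in> V.span (set us)"
      proof (rule REPZ[OF ind])
        show "set us \<subseteq> set (us @ gs)" by auto
        have "set us \<union> (set gs - {gs ! 0}) \<subseteq> set (us @ gs)" by auto
        then have "V.span (set us \<union> (set gs - {gs ! 0})) \<subseteq> V.span (set (us @ gs))" by (rule V.span_mono)
        then show "v \<in> V.span (set (us @ gs))" using vw[of 0] V\<omega>[of 0] r by auto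
        show "\<forall>b\<in>set (us @ gs) - set us. \<exists>C. C \<subseteq> set (us @ gs) \<and> b \<notin> C \<and> v \<in> V.span C"
        proof
          fix b assume b: "b \<in> set (us @ gs) - set us"
          then have "b \<in> set gs" by (metis DiffE Un_iff set_append)
          then obtain i where i: "i < r" "b = gs ! i" using us(2) by (metis in_set_conv_nth)
          have "b \<notin> set us \<union> (set gs - {gs ! i})" using b i by auto
          moreover have "set us \<union> (set gs - {gs ! i}) \<subseteq> set (us @ gs)" by auto
          moreover have "v \<in> V.span (set us \<union> (set gs - {gs ! i}))" using vw[OF i(1)] V\<omega>[OF i(1)] by simp
          ultimately show "\<exists>C. C \<subseteq> set (us @ gs) \<and> b \<notin> C \<and> v \<in> V.span C" by blast
        qed
      qed
    qed
  next
    show "V.span (set us) \<subseteq> V_low E"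
    proof
      fix v assume v: "v \<in> V.span (set us)"
      have "v \<in> V_of w" if wE: "w \<in> E" for w
      proof -
        obtain a ws where ws: "w = fscale a (wedge_list (us @ ws))" using rep1[OF wE] r by auto
        have "set us \<subseteq> set (us @ ws)" by auto
        then have "V.span (set us) \<subseteq> V.span (set (us @ ws))" by (rule V.span_mono)
        then have "v \<in> V.span (set (us @ ws))" using v by (rule subsetD)
        then have "wedge_vec v (wedge_list (us @ ws)) = 0" by (rule F5)
        then show ?thesis unfolding V_of_def ws by (simp add: wv_scale_right)
      qed
      then show "v \<in> V_low E" unfolding V_low_def by (rule INT_I)
    qed
  qed
  moreover have "V_up E = V.span (set Us)"
  proof
    show "V_up E \<subseteq> V.span (set Us)" by (rule Vup_le) (use VsubUs in blast)
  next
    have "V.span (set Us) \<subseteq> V.span (V_of (\<omega> 0) \<union> V_of (\<omega> 1))"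
      by (rule K2[OF liUs lenUs _ \<omega>E[of 0] \<omega>nz[of 0] \<omega>E[of 1] \<omega>nz[of 1] \<omega>01[OF r]])
         (use rep2 r in auto)
    also have "\<dots> \<subseteq> V_up E" unfolding V_up_def
      by (rule V.span_mono) (use \<omega>E \<omega>nz r in blast)
    finally show "V.span (set Us) \<subseteq> V_up E" .
  qed
  moreover have "V.dim (V.span (set us)) = l + 1 - r"
  proof -
    have "V.independent (set us)" using ind V.independent_mono[of "set (us @ gs)" "set us"] by auto
    then show ?thesis using V.dim_span_eq_card_independent[of "set us"] distinct_card[OF dus] lenus by simp
  qed
  moreover have "V.dim (V.span (set Us)) = l + 1"
    using V.dim_span_eq_card_independent[of "set Us"] liUs distinct_card[of Us] lenUs
    by (simp add: lin_indep_list_def)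
  ultimately show "V.dim (V_low E) = l + 1 - r \<and> V.dim (V_up E) = l + 1" by simp
qed


theorem lemma2p5:
  fixes E :: "('n::{finite,linorder} set \<Rightarrow> 'a::field) set"
    and l r :: nat
  assumes "1 \<le> l" and "l \<le> card (UNIV :: 'n set)"
    and "Modules.module.subspace fscale E" and "E \<subseteq> ext_power l"
    and "Vector_Spaces.vector_space.dim fscale E = r"
    and "close l r E"
  shows "decomposable_subspace l E
    \<and> (\<forall>B. (\<not> Modules.module.dependent fscale B \<and> Modules.module.span fscale B = E) \<longrightarrow>
          V_low E = (\<Inter>\<omega>\<in>B. V_of \<omega>) \<and> V_up E = Modules.module.span fscale (\<Union>\<omega>\<in>B. V_of \<omega>))
    \<and> (r > 1 \<longrightarrow>
          (close_I l r E \<longrightarrow> Vector_Spaces.vector_space.dim fscale (V_low E) = l - 1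
                                \<and> Vector_Spaces.vector_space.dim fscale (V_up E) = l + r - 1)
        \<and> (close_II l r E \<longrightarrow> Vector_Spaces.vector_space.dim fscale (V_low E) = l + 1 - r
                                \<and> Vector_Spaces.vector_space.dim fscale (V_up E) = l + 1))"
proof -
  have dimE: "V.dim E = r" using assms(5) by simp
  have cc: "close_I l r E \<or> close_II l r E" using assms(6) unfolding close_def .
  have both: "(\<forall>\<omega>\<in>E. \<exists>a xs. length xs = l \<and> \<omega> = fscale a (wedge_list xs)) \<and>
     (\<forall>B. V.independent B \<and> V.span B = E \<longrightarrow> (\<forall>\<omega>\<in>E - {0}. V_of \<omega> \<subseteq> V.span (\<Union>b\<in>B. V_of b)))"
    using cc
  proof
    assume c: "close_I l r E"
    show ?thesis using typeI(1)[OF assms(1) c] typeI(2)[OF assms(1) c] by (rule conjI)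
  next
    assume c: "close_II l r E"
    show ?thesis using typeII(1)[OF assms(1) c dimE] typeII(2)[OF assms(1) c dimE] by (rule conjI)
  qed
  have rep: "\<forall>\<omega>\<in>E. \<exists>a xs. length xs = l \<and> \<omega> = fscale a (wedge_list xs)" using both by (rule conjunct1)
  have P2': "\<forall>B. V.independent B \<and> V.span B = E \<longrightarrow> (\<forall>\<omega>\<in>E - {0}. V_of \<omega> \<subseteq> V.span (\<Union>b\<in>B. V_of b))"
    using both by (rule conjunct2)
  have P1: "decomposable_subspace l E" by (rule dec_of_rep[OF assms(1) rep])
  have P2: "\<forall>B. (\<not> V.dependent B \<and> V.span B = E) \<longrightarrow>
          V_low E = (\<Inter>\<omega>\<in>B. V_of \<omega>) \<and> V_up E = V.span (\<Union>\<omega>\<in>B. V_of \<omega>)"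
  proof (intro allI impI conjI)
    fix B assume B: "\<not> V.dependent B \<and> V.span B = E"
    show "V_low E = (\<Inter>\<omega>\<in>B. V_of \<omega>)" using B by (intro Vlow_B) simp
    show "V_up E = V.span (\<Union>\<omega>\<in>B. V_of \<omega>)"
    proof
      show "V_up E \<subseteq> V.span (\<Union>\<omega>\<in>B. V_of \<omega>)" by (rule Vup_le) (use P2' B in simp)
      show "V.span (\<Union>\<omega>\<in>B. V_of \<omega>) \<subseteq> V_up E" using B by (intro Vup_ge) simp_all
    qed
  qed
  have P3: "r > 1 \<longrightarrow>
          (close_I l r E \<longrightarrow> V.dim (V_low E) = l - 1 \<and> V.dim (V_up E) = l + r - 1)
        \<and> (close_II l r E \<longrightarrow> V.dim (V_low E) = l + 1 - r \<and> V.dim (V_up E) = l + 1)"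
  proof (rule impI)
    assume r: "r > 1"
    have X: "close_I l r E \<longrightarrow> V.dim (V_low E) = l - 1 \<and> V.dim (V_up E) = l + r - 1"
      by (rule impI, rule typeI(3)[OF assms(1) _ r], assumption)
    have Y: "close_II l r E \<longrightarrow> V.dim (V_low E) = l + 1 - r \<and> V.dim (V_up E) = l + 1"
      by (rule impI, rule typeII(3)[OF assms(1) _ dimE r], assumption)
    show "(close_I l r E \<longrightarrow> V.dim (V_low E) = l - 1 \<and> V.dim (V_up E) = l + r - 1)
        \<and> (close_II l r E \<longrightarrow> V.dim (V_low E) = l + 1 - r \<and> V.dim (V_up E) = l + 1)"
      using X Y by (rule conjI)
  qed
  show ?thesis using P1 P2 P3 by (intro conjI)
qed

end
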